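(* If $X$ is an (infinite) $T_1$-space, then $\psi(X)\le nu(X)\cdot 2^{s(X)}$.
   Context: A non-empty subset $A$ of a space $X$ is called finitely non-Urysohn if for every non-empty finite subset $F\subseteq A$ and every family $\{U_x:x\in F\}$ where each $U_x$ is an open neighborhood of $x$, we have $\bigcap_{x\in F}\overline{U_x}\neq\emptyset$. The non-Urysohn number is $nu(X):=1+\sup\{|A|:A\subseteq X$ finitely non-Urysohn$\}$. $s(X)$ denotes the spread of $X$ (supremum of cardinalities of discrete subspaces, plus $\omega$) and $\psi(X)$ the pseudocharacter. Throughout, "space" means infinite topological space. *)

theory Defs
  imports "HOL-Analysis.Analysis"
begin

definition finitely_non_urysohn :: "'a topology \<Rightarrow> 'a set \<Rightarrow> bool" where
  "finitely_non_urysohn X A \<longleftrightarrow> A \<noteq> {} \<and> A \<subseteq> topspace X \<and>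
     (\<forall>F U. finite F \<and> F \<noteq> {} \<and> F \<subseteq> A \<and> (\<forall>x\<in>F. openin X (U x) \<and> x \<in> U x)
        \<longrightarrow> (\<Inter>x\<in>F. X closure_of (U x)) \<noteq> {})"

definition discrete_subspace :: "'a topology \<Rightarrow> 'a set \<Rightarrow> bool" where
  "discrete_subspace X D \<longleftrightarrow> D \<subseteq> topspace X \<and> subtopology X D = discrete_topology D"

text \<open>nu(X) = 1 + sup{|A| : A finitely non-Urysohn} is <= nu\<close>
definition nu_le :: "'a topology \<Rightarrow> 'b rel \<Rightarrow> bool" where
  "nu_le X \<nu> \<longleftrightarrow> (\<forall>A. finitely_non_urysohn X A \<longrightarrow> (BNF_Cardinal_Arithmetic.csum BNF_Cardinal_Arithmetic.cone (card_of A), \<nu>) \<in> ordLeq)"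

text \<open>s(X) = sup{|D| : D discrete subspace} + omega is <= sigma\<close>
definition spread_le :: "'a topology \<Rightarrow> 'b rel \<Rightarrow> bool" where
  "spread_le X \<sigma> \<longleftrightarrow> (natLeq, \<sigma>) \<in> ordLeq \<and> (\<forall>D. discrete_subspace X D \<longrightarrow> (card_of D, \<sigma>) \<in> ordLeq)"

text \<open>psi(X) = sup over points x of the least cardinality of a family of open sets
  whose intersection is {x} (plus omega) is <= kappa\<close>
definition psi_le :: "'a topology \<Rightarrow> 'b rel \<Rightarrow> bool" where
  "psi_le X \<kappa> \<longleftrightarrow> (natLeq, \<kappa>) \<in> ordLeq \<and>
     (\<forall>x\<in>topspace X. \<exists>\<U>. (\<forall>U\<in>\<U>. openin X U) \<and> topspace X \<inter> \<Inter>\<U> = {x} \<and> (card_of \<U>, \<kappa>) \<in> ordLeq)"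

end

theory Submission
  imports Defs
begin

unbundle cardinal_syntax

lemma sapir:
  fixes X :: "'a topology"
  assumes t1: "t1_space X" and Z: "Z \<subseteq> topspace X"
    and W: "\<And>z. z \<in> Z \<Longrightarrow> openin X (W z) \<and> z \<in> W z"
  shows "\<exists>A \<subseteq> Z. (\<forall>a\<in>A. \<exists>G. openin X G \<and> G \<inter> A = {a}) \<and> Z \<subseteq> X closure_of A \<union> (\<Union>a\<in>A. W a)"
proof -
  define S where "S = {A. A \<subseteq> Z \<and> (\<forall>a\<in>A. \<exists>G. openin X G \<and> G \<inter> A = {a})}"
  define P where "P = (\<lambda>A B. A \<subseteq> B \<and> (\<forall>b\<in>B-A. b \<notin> X closure_of A \<and> (\<forall>a\<in>A. b \<notin> W a)))"
  have po: "partial_order_on S (relation_of P S)"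
  proof (rule partial_order_on_relation_ofI)
    show "P a a" for a by (simp add: P_def)
    show "P a c" if "P a b" "P b c" for a b c
    proof -
      have "X closure_of a \<subseteq> X closure_of b" using that closure_of_mono unfolding P_def by blast
      then show ?thesis using that unfolding P_def by blast
    qed
    show "a = b" if "P a b" "P b a" for a b using that unfolding P_def by auto
  qed
  have ch: "\<exists>u\<in>S. \<forall>a\<in>C. P a u" if C: "C \<in> Chains (relation_of P S)" for C
  proof -
    have CS: "C \<subseteq> S" using Chains_relation_of[OF C] .
    have cmp: "P a b \<or> P b a" if "a \<in> C" "b \<in> C" for a b
      using C that unfolding Chains_def relation_of_def by auto
    have up: "P a (\<Union>C)" if aC: "a \<in> C" for a
    proof -
      have "b \<notin> X closure_of a \<and> (\<forall>a'\<in>a. b \<notin> W a')" if bC: "b \<in> (\<Union>C) - a" for b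
      proof -
        obtain c where c: "c \<in> C" "b \<in> c" "b \<notin> a" using bC by blast
        from cmp[OF aC c(1)] have "P a c" using c unfolding P_def by blast
        then show ?thesis using c unfolding P_def by blast
      qed
      then show ?thesis unfolding P_def using aC by blast
    qed
    have "\<Union>C \<in> S"
      unfolding S_def
    proof (intro CollectI conjI ballI)
      show "\<Union>C \<subseteq> Z" using CS unfolding S_def by blast
      fix x assume "x \<in> \<Union>C"
      then obtain a where a: "a \<in> C" "x \<in> a" by blast
      then obtain G where G: "openin X G" "G \<inter> a = {x}" using CS unfolding S_def by blast
      have xZ: "x \<in> Z" using a CS unfolding S_def by blast
      have "(G \<inter> W x) \<inter> \<Union>C = {x}"
      proof
        show "{x} \<subseteq> G \<inter> W x \<inter> \<Union>C" using G a W[OF xZ] by blast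
        show "G \<inter> W x \<inter> \<Union>C \<subseteq> {x}"
        proof
          fix y assume y: "y \<in> G \<inter> W x \<inter> \<Union>C"
          show "y \<in> {x}"
          proof (cases "y \<in> a")
            case True then show ?thesis using y G by blast
          next
            case False
            then have "y \<in> (\<Union>C) - a" using y by blast
            then show ?thesis using up[OF a(1)] a(2) y unfolding P_def by blast
          qed
        qed
      qed
      then show "\<exists>G. openin X G \<and> G \<inter> \<Union>C = {x}" using G W[OF xZ] by blast
    qed
    then show ?thesis using up by blast
  qed
  obtain M where M: "M \<in> S" and max: "\<And>a. a \<in> S \<Longrightarrow> P M a \<Longrightarrow> a = M"
    using predicate_Zorn[OF po ch] by blast
  have MZ: "M \<subseteq> Z" using M unfolding S_def by blast
  have cover: "Z \<subseteq> X closure_of M \<union> (\<Union>a\<in>M. W a)"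
  proof
    fix z assume zZ: "z \<in> Z"
    show "z \<in> X closure_of M \<union> (\<Union>a\<in>M. W a)"
    proof (rule ccontr)
      assume nz: "z \<notin> X closure_of M \<union> (\<Union>a\<in>M. W a)"
      have Mt: "M \<subseteq> topspace X" using MZ Z by blast
      then have zM: "z \<notin> M" using closure_of_subset nz by blast
      have "insert z M \<in> S"
        unfolding S_def
      proof (intro CollectI conjI ballI)
        show "insert z M \<subseteq> Z" using zZ MZ by blast
        fix x assume x: "x \<in> insert z M"
        show "\<exists>G. openin X G \<and> G \<inter> insert z M = {x}"
        proof (cases "x = z")
          case True
          have "openin X (topspace X - X closure_of M)" by (simp add: openin_diff)
          moreover have "(topspace X - X closure_of M) \<inter> insert z M = {z}"
            using nz zZ Z closure_of_subset[OF Mt] by auto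
          ultimately show ?thesis using True by (intro exI[of _ "topspace X - X closure_of M"]) simp
        next
          case False
          then have xM: "x \<in> M" using x by blast
          then obtain G where G: "openin X G" "G \<inter> M = {x}" using M unfolding S_def by blast
          have "openin X (G - {z})" using G(1) t1 unfolding t1_space_openin_delete_alt by blast
          moreover have "(G - {z}) \<inter> insert z M = {x}" using G False by auto
          ultimately show ?thesis by (intro exI[of _ "G - {z}"]) simp
        qed
      qed
      moreover have "P M (insert z M)" using nz unfolding P_def by blast
      ultimately have "insert z M = M" using max by blast
      then show False using zM by blast
    qed
  qed
  show ?thesis using MZ M cover unfolding S_def by (intro exI[of _ M]) simp
qed


lemma pow_le:
  assumes A: "|A| \<le>o \<sigma>" and c: "Card_order \<sigma>"
  shows "|Pow A| \<le>o BNF_Cardinal_Arithmetic.cexp BNF_Cardinal_Arithmetic.ctwo \<sigma>"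
proof -
  have "|A| \<le>o |Field \<sigma>|"
    using ordLeq_ordIso_trans[OF A ordIso_symmetric[OF card_of_Field_ordIso[OF c]]] .
  then obtain f where f: "inj_on f A" "f ` A \<subseteq> Field \<sigma>"
    unfolding card_of_ordLeq[symmetric] by blast
  have "inj_on (image f) (Pow A)" by (rule inj_on_image_Pow[OF f(1)])
  moreover have "image f ` Pow A \<subseteq> Pow (Field \<sigma>)" using f(2) by blast
  ultimately have "|Pow A| \<le>o |Pow (Field \<sigma>)|"
    unfolding card_of_ordLeq[symmetric] by blast
  moreover have "|Pow (Field \<sigma>)| =o BNF_Cardinal_Arithmetic.cexp BNF_Cardinal_Arithmetic.ctwo \<sigma>"
    unfolding cexp_def ctwo_def Field_card_of by (rule card_of_Pow_Func)
  ultimately show ?thesis by (rule ordLeq_ordIso_trans)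
qed

lemma sum_le:
  fixes \<nu> :: "'b rel" and T :: "'c rel"
  assumes cn: "Cnotzero \<nu>" and cT: "Cinfinite T"
    and a: "|A| \<le>o \<nu>" and b: "|B| \<le>o T" and c: "|C| \<le>o T"
  shows "|A \<union> B \<union> C| \<le>o BNF_Cardinal_Arithmetic.cprod \<nu> T"
proof -
  have 1: "|B \<union> C| \<le>o |B| +c |C|" by (rule Un_csum)
  have 2: "|B| +c |C| \<le>o T +c T" using csum_mono[OF b c] .
  have 3: "T +c T =o T" using csum_absorb1[OF cT ordLeq_refl[of T]] cT by simp
  have bc: "|B \<union> C| \<le>o T" by (rule ordLeq_ordIso_trans[OF ordLeq_transitive[OF 1 2] 3])
  have 4: "|A \<union> (B \<union> C)| \<le>o |A| +c |B \<union> C|" by (rule Un_csum)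
  have 5: "|A| +c |B \<union> C| \<le>o \<nu> +c T" using csum_mono[OF a bc] .
  have 6: "\<nu> +c T \<le>o \<nu> *c T"
  proof -
    have wn: "Well_order \<nu>" using card_order_on_well_order_on cn by blast
    have wT: "Well_order T" using card_order_on_well_order_on cT by blast
    have T1: "T \<le>o \<nu> *c T" by (rule ordLeq_cprod2[OF cn conjunct2[OF cT]])
    have n0: "\<nu> \<le>o T *c \<nu>" by (rule ordLeq_cprod2[OF Cinfinite_Cnotzero[OF cT] conjunct2[OF cn]])
    have n1: "\<nu> \<le>o \<nu> *c T"
      by (rule ordLeq_ordIso_trans[OF n0 cprod_com])
    from ordLeq_total[OF wn wT] show ?thesis
    proof
      assume "\<nu> \<le>o T"
      then have "\<nu> +c T =o T" by (rule csum_absorb2[OF cT])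
      then show ?thesis using T1 by (rule ordIso_ordLeq_trans)
    next
      assume "T \<le>o \<nu>"
      then have "cinfinite \<nu>" by (rule cinfinite_mono[OF _ conjunct1[OF cT]])
      then have "\<nu> +c T =o \<nu>" by (rule csum_absorb1[OF conjI[OF _ conjunct2[OF cn]] \<open>T \<le>o \<nu>\<close>])
      then show ?thesis using n1 by (rule ordIso_ordLeq_trans)
    qed
  qed
  have "|A \<union> (B \<union> C)| \<le>o \<nu> *c T"
    by (rule ordLeq_transitive[OF ordLeq_transitive[OF 4 5] 6])
  then show ?thesis by (simp add: Un_assoc)
qed


lemma fnu_le:
  assumes "nu_le X \<nu>" "finitely_non_urysohn X A"
  shows "|A| \<le>o \<nu>"
proof -
  have "cone +c |A| \<le>o \<nu>" using assms unfolding nu_le_def by blast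
  then show ?thesis by (rule ordLeq_transitive[OF ordLeq_csum2[OF card_of_Card_order]])
qed

theorem corollary3p10:
  fixes X :: "'a topology" and \<nu> :: "'b rel" and \<sigma> :: "'c rel"
  assumes "t1_space X" and "infinite (topspace X)"
    and "Card_order \<nu>" and "Card_order \<sigma>"
    and "nu_le X \<nu>" and "spread_le X \<sigma>"
  shows "psi_le X (BNF_Cardinal_Arithmetic.cprod \<nu> (BNF_Cardinal_Arithmetic.cexp BNF_Cardinal_Arithmetic.ctwo \<sigma>))"
proof -
  note t1 = assms(1) and cnu = assms(3) and cs = assms(4) and nul = assms(5)
  define T where "T = ctwo ^c \<sigma>"
  have ns: "natLeq \<le>o \<sigma>" and sD: "\<And>D. discrete_subspace X D \<Longrightarrow> |D| \<le>o \<sigma>"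
    using assms(6) unfolding spread_le_def by auto
  have cinfs: "Cinfinite \<sigma>" using cinfinite_mono[OF ns natLeq_cinfinite] cs by simp
  have cT: "Cinfinite T" unfolding T_def
    by (rule Cinfinite_cexp[OF ordLeq_refl[OF Card_order_ctwo] cinfs])
  have sT: "\<sigma> \<le>o T" unfolding T_def by (rule ordLeq_cexp2[OF ordLeq_refl[OF Card_order_ctwo] cs])
  obtain p0 where p0: "p0 \<in> topspace X" using assms(2) by fastforce
  have "finitely_non_urysohn X {p0}"
    unfolding finitely_non_urysohn_def
  proof (intro conjI allI impI)
    fix F U assume h: "finite F \<and> F \<noteq> {} \<and> F \<subseteq> {p0} \<and> (\<forall>x\<in>F. openin X (U x) \<and> x \<in> U x)"
    then have F: "F = {p0}" by blast
    have "openin X (U p0)" "p0 \<in> U p0" using h F by auto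
    then have "p0 \<in> X closure_of (U p0)"
      using closure_of_subset[OF openin_subset] by blast
    then show "(\<Inter>x\<in>F. X closure_of (U x)) \<noteq> {}" using F by auto
  qed (use p0 in auto)
  then have p0le: "|{p0}| \<le>o \<nu>" by (rule fnu_le[OF nul])
  have c0: "Cnotzero |{p0}|"
    using card_of_ordIso_czero_iff_empty[of "{p0}"] card_of_Card_order[of "{p0}"] by simp
  have cn: "Cnotzero \<nu>" by (rule Cnotzero_mono[OF c0 cnu p0le])
  have Kge: "T \<le>o \<nu> *c T" by (rule ordLeq_cprod2[OF cn conjunct2[OF cT]])
  have natK: "natLeq \<le>o \<nu> *c T" using ordLeq_transitive[OF ns ordLeq_transitive[OF sT Kge]] .
  show ?thesis
    unfolding psi_le_def T_def[symmetric]
  proof (intro conjI natK ballI)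
    fix p assume p: "p \<in> topspace X"
    define H where "H = {y \<in> topspace X. \<forall>U V. openin X U \<and> y \<in> U \<and> openin X V \<and> p \<in> V \<longrightarrow> U \<inter> V \<noteq> {}}"
    have pH: "p \<in> H" using p unfolding H_def by blast
    have "finitely_non_urysohn X H"
      unfolding finitely_non_urysohn_def
    proof (intro conjI allI impI)
      show "H \<noteq> {}" using pH by blast
      show "H \<subseteq> topspace X" unfolding H_def by blast
      fix F U assume h: "finite F \<and> F \<noteq> {} \<and> F \<subseteq> H \<and> (\<forall>x\<in>F. openin X (U x) \<and> x \<in> U x)"
      have "p \<in> X closure_of (U x)" if "x \<in> F" for x
        unfolding in_closure_of
      proof (intro conjI allI impI p)
        fix V assume V: "p \<in> V \<and> openin X V"
        have "x \<in> H" "openin X (U x)" "x \<in> U x" using h that by auto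
        then have "U x \<inter> V \<noteq> {}" using V unfolding H_def by blast
        then show "\<exists>y. y \<in> U x \<and> y \<in> V" by blast
      qed
      then show "(\<Inter>x\<in>F. X closure_of (U x)) \<noteq> {}" by blast
    qed
    then have Hle: "|H| \<le>o \<nu>" by (rule fnu_le[OF nul])
    define Z where "Z = topspace X - H"
    have "\<exists>U. openin X U \<and> z \<in> U \<and> p \<notin> X closure_of U" if "z \<in> Z" for z
    proof -
      have "z \<in> topspace X" "z \<notin> H" using that unfolding Z_def by auto
      then have "\<exists>U V. openin X U \<and> z \<in> U \<and> openin X V \<and> p \<in> V \<and> U \<inter> V = {}"
        unfolding H_def by simp
      then obtain U V where UV: "openin X U" "z \<in> U" "openin X V" "p \<in> V" "U \<inter> V = {}"
        by blast
      then have "p \<notin> X closure_of U" unfolding in_closure_of by blast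
      then show ?thesis using UV by blast
    qed
    then obtain W where W: "\<And>z. z \<in> Z \<Longrightarrow> openin X (W z) \<and> z \<in> W z \<and> p \<notin> X closure_of (W z)"
      by metis
    have Zt: "Z \<subseteq> topspace X" unfolding Z_def by blast
    have "\<exists>A \<subseteq> Z. (\<forall>a\<in>A. \<exists>G. openin X G \<and> G \<inter> A = {a}) \<and> Z \<subseteq> X closure_of A \<union> (\<Union>a\<in>A. W a)"
      by (rule sapir[OF t1 Zt]) (use W in blast)
    then obtain A where AZ: "A \<subseteq> Z" and Adisc: "\<forall>a\<in>A. \<exists>G. openin X G \<and> G \<inter> A = {a}"
      and cov: "Z \<subseteq> X closure_of A \<union> (\<Union>a\<in>A. W a)"
      by blast
    have At: "A \<subseteq> topspace X" using AZ unfolding Z_def by blast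
    have "discrete_subspace X A"
      unfolding discrete_subspace_def
    proof (intro conjI At)
      have "discrete_topology A = subtopology X A"
        unfolding discrete_topology_unique
      proof (intro conjI ballI)
        show "topspace (subtopology X A) = A" using topspace_subtopology_subset[OF At] .
        fix a assume "a \<in> A"
        then obtain G where "openin X G" "G \<inter> A = {a}" using Adisc by blast
        then show "openin (subtopology X A) {a}" unfolding openin_subtopology by blast
      qed
      then show "subtopology X A = discrete_topology A" by simp
    qed
    then have AT: "|A| \<le>o T" by (rule ordLeq_transitive[OF sD sT])
    define S3 where "S3 = {S. S \<subseteq> A \<and> p \<notin> X closure_of S}"
    have S3T: "|S3| \<le>o T"
    proof -
      have "|S3| \<le>o |Pow A|" by (rule card_of_mono1) (auto simp: S3_def)
      moreover have "|Pow A| \<le>o T" unfolding T_def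
        by (rule pow_le[OF sD[OF \<open>discrete_subspace X A\<close>] cs])
      ultimately show ?thesis by (rule ordLeq_transitive)
    qed
    define f1 where "f1 = (\<lambda>h. topspace X - {h})"
    define f2 where "f2 = (\<lambda>a. topspace X - X closure_of (W a))"
    define f3 where "f3 = (\<lambda>S. topspace X - X closure_of S)"
    define \<U> where "\<U> = f1 ` (H - {p}) \<union> f2 ` A \<union> f3 ` S3"
    have c1: "|f1 ` (H - {p})| \<le>o \<nu>"
      by (rule ordLeq_transitive[OF card_of_image ordLeq_transitive[OF card_of_mono1 Hle]]) blast
    have c2: "|f2 ` A| \<le>o T" using ordLeq_transitive[OF card_of_image AT] .
    have c3: "|f3 ` S3| \<le>o T" using ordLeq_transitive[OF card_of_image S3T] .
    have card: "|\<U>| \<le>o \<nu> *c T" unfolding \<U>_def by (rule sum_le[OF cn cT c1 c2 c3])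
    have opn: "\<forall>U\<in>\<U>. openin X U"
    proof
      fix U assume "U \<in> \<U>"
      then consider (a) h where "h \<in> H - {p}" "U = f1 h" | (b) a where "a \<in> A" "U = f2 a"
        | (c) S where "S \<in> S3" "U = f3 S" unfolding \<U>_def by blast
      then show "openin X U"
      proof cases
        case a
        have "h \<in> topspace X" using a unfolding H_def by blast
        then have "closedin X {h}" using t1 unfolding t1_space_closedin_singleton by blast
        then show ?thesis using a unfolding f1_def by (simp add: openin_diff)
      next
        case b then show ?thesis unfolding f2_def by (simp add: openin_diff)
      next
        case c then show ?thesis unfolding f3_def by (simp add: openin_diff)
      qed
    qed
    have "topspace X \<inter> \<Inter>\<U> = {p}"
    proof
      have "p \<in> U" if "U \<in> \<U>" for U
      proof -
        from that consider (a) h where "h \<in> H - {p}" "U = f1 h" | (b) a where "a \<in> A" "U = f2 a"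
          | (c) S where "S \<in> S3" "U = f3 S" unfolding \<U>_def by blast
        then show "p \<in> U"
        proof cases
          case a then show ?thesis using p unfolding f1_def by blast
        next
          case b then have "a \<in> Z" using AZ by blast
          then show ?thesis using W b p unfolding f2_def by blast
        next
          case c then show ?thesis using p unfolding f3_def S3_def by blast
        qed
      qed
      then show "{p} \<subseteq> topspace X \<inter> \<Inter>\<U>" using p by blast
      show "topspace X \<inter> \<Inter>\<U> \<subseteq> {p}"
      proof
        fix y assume y: "y \<in> topspace X \<inter> \<Inter>\<U>"
        show "y \<in> {p}"
        proof (rule ccontr)
          assume yp: "y \<notin> {p}"
          show False
          proof (cases "y \<in> H")
            case True
            then have "f1 y \<in> \<U>" using yp unfolding \<U>_def by blast
            then show False using y unfolding f1_def by blast
          next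
            case False
            then have yZ: "y \<in> Z" using y unfolding Z_def by blast
            then have "y \<in> X closure_of A \<or> (\<exists>a\<in>A. y \<in> W a)" using cov by blast
            then show False
            proof
              assume "\<exists>a\<in>A. y \<in> W a"
              then obtain a where a: "a \<in> A" "y \<in> W a" by blast
              then have "a \<in> Z" using AZ by blast
              then have "y \<in> X closure_of (W a)"
                using a W closure_of_subset[OF openin_subset] by blast
              moreover have "f2 a \<in> \<U>" using a unfolding \<U>_def by blast
              ultimately show False using y unfolding f2_def by blast
            next
              assume yA: "y \<in> X closure_of A"
              have Wy: "openin X (W y)" "y \<in> W y" "p \<notin> X closure_of (W y)" using W yZ by auto
              have "y \<in> X closure_of (W y \<inter> A)"
                using openin_Int_closure_of_subset[OF Wy(1), of A] Wy(2) yA by blast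
              moreover have "p \<notin> X closure_of (W y \<inter> A)"
                using Wy(3) closure_of_mono[of "W y \<inter> A" "W y" X] by blast
              then have "W y \<inter> A \<in> S3" unfolding S3_def by blast
              then have "f3 (W y \<inter> A) \<in> \<U>" unfolding \<U>_def by blast
              ultimately show False using y unfolding f3_def by blast
            qed
          qed
        qed
      qed
    qed
    then show "\<exists>\<U>. (\<forall>U\<in>\<U>. openin X U) \<and> topspace X \<inter> \<Inter>\<U> = {p} \<and> |\<U>| \<le>o \<nu> *c T"
      using opn card by blast
  qed
qed

end
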